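(* Let $g$ be a probability density on $\mathbb R$, $W_1,\dots,W_n$ independent standard Brownian motions on $[0,1]$, and $f\in L^2([0,1])$ extended 1-periodically to $\mathbb R$. Then for every $\alpha>0$, $$\mathbb P\Big(\frac12\sum_{i=1}^n\int_{\mathbb R}g(\tau)\Big[\int_0^1f(t-\tau)\,dW_i(t)\Big]^2d\tau-\frac n2\|f\|^2\ge\alpha\Big)\le\exp\Big(\frac{-\alpha^2}{n\|f\|^4+2\alpha\|f\|^2}\Big).$$
   Context: $\|f\|^2=\int_0^1|f(x)|^2dx$. The stochastic integrals are Itô integrals with respect to $W_i$. *)

theory Defs
  imports "HOL-Probability.Probability"
begin

definition std_brownian_motion :: "'a measure \<Rightarrow> (real \<Rightarrow> 'a \<Rightarrow> real) \<Rightarrow> bool" where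
  "std_brownian_motion M W \<longleftrightarrow>
     prob_space M \<and>
     (\<forall>t\<in>{0..1}. W t \<in> borel_measurable M) \<and>
     (AE \<omega> in M. W 0 \<omega> = 0) \<and>
     (AE \<omega> in M. continuous_on {0..1} (\<lambda>t. W t \<omega>)) \<and>
     (\<forall>s t. 0 \<le> s \<longrightarrow> s < t \<longrightarrow> t \<le> 1 \<longrightarrow>
        distributed M lborel (\<lambda>\<omega>. W t \<omega> - W s \<omega>) (normal_density 0 (sqrt (t - s)))) \<and>
     (\<forall>ts :: real list. sorted_wrt (<) ts \<longrightarrow> set ts \<subseteq> {0..1} \<longrightarrow>
        prob_space.indep_vars M (\<lambda>_. borel) (\<lambda>k \<omega>. W (ts ! Suc k) \<omega> - W (ts ! k) \<omega>)
          {..<length ts - 1})"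

definition step_fun :: "(real \<times> real \<times> real) list \<Rightarrow> real \<Rightarrow> real" where
  "step_fun d t = (\<Sum>(c, a, b)\<leftarrow>d. c * indicator {a<..b} t)"

definition step_int :: "(real \<Rightarrow> 'a \<Rightarrow> real) \<Rightarrow> (real \<times> real \<times> real) list \<Rightarrow> 'a \<Rightarrow> real" where
  "step_int W d \<omega> = (\<Sum>(c, a, b)\<leftarrow>d. c * (W b \<omega> - W a \<omega>))"

text \<open>X is (a version of) the Ito integral of the deterministic L2 integrand h over [0,1]
  w.r.t. W: the L2(M)-limit of the stochastic integrals of step functions approximating h
  in L2[0,1].\<close>
definition is_ito_integral ::
    "'a measure \<Rightarrow> (real \<Rightarrow> 'a \<Rightarrow> real) \<Rightarrow> (real \<Rightarrow> real) \<Rightarrow> ('a \<Rightarrow> real) \<Rightarrow> bool" where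
  "is_ito_integral M W h X \<longleftrightarrow>
     X \<in> borel_measurable M \<and>
     (\<exists>d :: nat \<Rightarrow> (real \<times> real \<times> real) list.
        (\<forall>k. \<forall>(c, a, b) \<in> set (d k). 0 \<le> a \<and> a \<le> b \<and> b \<le> 1) \<and>
        ((\<lambda>k. \<integral>\<^sup>+ t. ennreal (indicator {0..1} t * (step_fun (d k) t - h t)\<^sup>2) \<partial>lborel)
            \<longlonglongrightarrow> 0) \<and>
        ((\<lambda>k. \<integral>\<^sup>+ \<omega>. ennreal ((step_int W (d k) \<omega> - X \<omega>)\<^sup>2) \<partial>M) \<longlonglongrightarrow> 0))"

end

theory Submission
  imports Defs
begin

lemma sorted_nth_le_iff:
  fixes ps :: "real list"
  assumes "sorted_wrt (<) ps" "i < length ps" "j < length ps"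
  shows "ps ! i \<le> ps ! j \<longleftrightarrow> i \<le> j"
proof -
  have "i < j \<Longrightarrow> ps ! i < ps ! j" "j < i \<Longrightarrow> ps ! j < ps ! i"
    using assms sorted_wrt_nth_less by blast+
  then show ?thesis by (cases i j rule: linorder_cases) auto
qed

lemma refine_single:
  fixes ps :: "real list" and G :: "real \<Rightarrow> real"
  assumes ps: "sorted_wrt (<) ps" and a: "a \<in> set ps" and b: "b \<in> set ps" and ab: "a \<le> b"
  shows "(\<Sum>j<length ps - 1. (if a \<le> ps!j \<and> ps!(Suc j) \<le> b then 1 else 0) * (G (ps!Suc j) - G (ps!j)))
         = G b - G a"
proof -
  obtain u where u: "u < length ps" "a = ps ! u" using a by (auto simp: in_set_conv_nth)
  obtain v where v: "v < length ps" "b = ps ! v" using b by (auto simp: in_set_conv_nth)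
  have uv: "u \<le> v" using sorted_nth_le_iff[OF ps u(1) v(1)] u v ab by simp
  have "(\<Sum>j<length ps - 1. (if a \<le> ps!j \<and> ps!(Suc j) \<le> b then 1 else 0) * (G (ps!Suc j) - G (ps!j)))
      = (\<Sum>j<length ps - 1. (if j \<in> {u..<v} then G (ps!Suc j) - G (ps!j) else 0))"
  proof (rule sum.cong)
    fix j assume j: "j \<in> {..<length ps - 1}"
    then have "a \<le> ps!j \<longleftrightarrow> u \<le> j" "ps!(Suc j) \<le> b \<longleftrightarrow> Suc j \<le> v"
      using sorted_nth_le_iff[OF ps] u v by auto
    then show "(if a \<le> ps!j \<and> ps!(Suc j) \<le> b then 1 else 0) * (G (ps!Suc j) - G (ps!j))
      = (if j \<in> {u..<v} then G (ps!Suc j) - G (ps!j) else 0)" by auto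
  qed simp
  also have "\<dots> = (\<Sum>j\<in>{u..<v}. G (ps!Suc j) - G (ps!j))"
    using v(1) by (subst sum.If_cases) (auto intro!: sum.cong)
  also have "\<dots> = G (ps!v) - G (ps!u)"
    using sum_Suc_diff'[OF uv, of "\<lambda>j. G (ps!j)"] by simp
  finally show ?thesis using u v by simp
qed

definition coef :: "(real \<times> real \<times> real) list \<Rightarrow> real list \<Rightarrow> nat \<Rightarrow> real" where
  "coef d ps j = (\<Sum>(c, a, b)\<leftarrow>d. c * (if a \<le> ps!j \<and> ps!(Suc j) \<le> b then 1 else 0))"

lemma refine:
  fixes ps :: "real list" and G :: "real \<Rightarrow> real"
  assumes ps: "sorted_wrt (<) ps"
    and d: "\<forall>(c, a, b)\<in>set d. a \<in> set ps \<and> b \<in> set ps \<and> a \<le> b"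
  shows "(\<Sum>(c, a, b)\<leftarrow>d. c * (G b - G a)) = (\<Sum>j<length ps - 1. coef d ps j * (G (ps!Suc j) - G (ps!j)))"
  using d
proof (induction d)
  case Nil
  then show ?case by (simp add: coef_def)
next
  case (Cons x d)
  obtain c a b where x: "x = (c, a, b)" by (cases x) auto
  have IH: "(\<Sum>(c, a, b)\<leftarrow>d. c * (G b - G a)) = (\<Sum>j<length ps - 1. coef d ps j * (G (ps!Suc j) - G (ps!j)))"
    using Cons by auto
  have s: "G b - G a = (\<Sum>j<length ps - 1. (if a \<le> ps!j \<and> ps!(Suc j) \<le> b then 1 else 0) * (G (ps!Suc j) - G (ps!j)))"
    using refine_single[OF ps] Cons.prems x by auto
  have "(\<Sum>(c, a, b)\<leftarrow>x # d. c * (G b - G a)) = c * (G b - G a) + (\<Sum>(c, a, b)\<leftarrow>d. c * (G b - G a))"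
    by (simp add: x)
  also have "\<dots> = (\<Sum>j<length ps - 1. coef (x#d) ps j * (G (ps!Suc j) - G (ps!j)))"
    unfolding IH s by (simp add: x coef_def sum_distrib_left sum.distrib[symmetric] algebra_simps)
  finally show ?case .
qed

lemma nn_integral_normal_density: "\<sigma> > 0 \<Longrightarrow> (\<integral>\<^sup>+x. ennreal (normal_density \<mu> \<sigma> x) \<partial>lborel) = 1"
  by (subst nn_integral_eq_integral) (simp_all add: integrable_normal_density integral_normal_density)

lemma gauss_mgf:
  assumes "prob_space M" and Y: "distributed M lborel Y (normal_density 0 \<sigma>)"
    and s: "\<sigma> > 0" and q: "2 * \<mu> * \<sigma>\<^sup>2 < 1"
  shows "(\<integral>\<^sup>+\<omega>. ennreal (exp (\<mu> * (Y \<omega>)\<^sup>2)) \<partial>M) = ennreal (1 / sqrt (1 - 2 * \<mu> * \<sigma>\<^sup>2))"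
proof -
  define q where "q = 1 - 2 * \<mu> * \<sigma>\<^sup>2"
  have qp: "q > 0" using q by (simp add: q_def)
  define \<sigma>' where "\<sigma>' = \<sigma> / sqrt q"
  have eq: "normal_density 0 \<sigma> x * exp (\<mu> * x\<^sup>2) = (1 / sqrt q) * normal_density 0 \<sigma>' x" for x
  proof -
    have "\<sigma>'\<^sup>2 = \<sigma>\<^sup>2 / q" using qp by (simp add: \<sigma>'_def power_divide)
    then have "sqrt (2 * pi * \<sigma>'\<^sup>2) = sqrt (2 * pi * \<sigma>\<^sup>2) / sqrt q"
      by (simp add: real_sqrt_divide[symmetric])
    then have 1: "1 / sqrt (2 * pi * \<sigma>'\<^sup>2) = sqrt q / sqrt (2 * pi * \<sigma>\<^sup>2)"
      using qp s by simp
    have "-(x - 0)\<^sup>2 / (2 * \<sigma>'\<^sup>2) = -(x - 0)\<^sup>2 * q / (2 * \<sigma>\<^sup>2)"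
      using \<open>\<sigma>'\<^sup>2 = \<sigma>\<^sup>2 / q\<close> qp s by simp
    also have "\<dots> = -(x - 0)\<^sup>2 / (2 * \<sigma>\<^sup>2) + \<mu> * x\<^sup>2"
      using s by (simp add: q_def field_simps)
    finally have 2: "-(x - 0)\<^sup>2 / (2 * \<sigma>'\<^sup>2) = -(x - 0)\<^sup>2 / (2 * \<sigma>\<^sup>2) + \<mu> * x\<^sup>2" .
    show ?thesis unfolding normal_density_def 1 2 using qp
      by (simp add: exp_add exp_minus exp_diff field_simps)
  qed
  have "(\<integral>\<^sup>+\<omega>. ennreal (exp (\<mu> * (Y \<omega>)\<^sup>2)) \<partial>M)
      = (\<integral>\<^sup>+x. ennreal (normal_density 0 \<sigma> x) * ennreal (exp (\<mu> * x\<^sup>2)) \<partial>lborel)"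
    by (subst distributed_nn_integral[OF Y]) auto
  also have "\<dots> = (\<integral>\<^sup>+x. ennreal (1 / sqrt q) * ennreal (normal_density 0 \<sigma>' x) \<partial>lborel)"
  proof (intro nn_integral_cong)
    fix x
    have "ennreal (normal_density 0 \<sigma> x) * ennreal (exp (\<mu> * x\<^sup>2)) = ennreal (normal_density 0 \<sigma> x * exp (\<mu> * x\<^sup>2))"
      by (simp add: ennreal_mult)
    also have "\<dots> = ennreal ((1 / sqrt q) * normal_density 0 \<sigma>' x)" by (simp only: eq)
    also have "\<dots> = ennreal (1 / sqrt q) * ennreal (normal_density 0 \<sigma>' x)"
      using qp by (intro ennreal_mult) auto
    finally show "ennreal (normal_density 0 \<sigma> x) * ennreal (exp (\<mu> * x\<^sup>2)) = ennreal (1 / sqrt q) * ennreal (normal_density 0 \<sigma>' x)" .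
  qed
  also have "\<dots> = ennreal (1 / sqrt q)"
    by (subst nn_integral_cmult) (auto simp: nn_integral_normal_density \<sigma>'_def s qp)
  finally show ?thesis by (simp add: q_def)
qed

lemma sum_list_map_cong: "(\<And>x. x \<in> set xs \<Longrightarrow> f x = g x) \<Longrightarrow> sum_list (map f xs) = sum_list (map g xs)"
  by (metis map_cong)

lemma step_gauss:
  assumes BM: "std_brownian_motion M W"
    and d: "\<forall>(c, a, b)\<in>set d. 0 \<le> a \<and> a \<le> b \<and> b \<le> 1"
  shows "\<exists>V\<ge>0. (\<integral>\<^sup>+t. ennreal (indicator {0..1} t * (step_fun d t)\<^sup>2) \<partial>lborel) = ennreal V \<and>
     (\<forall>\<mu>. 0 \<le> \<mu> \<longrightarrow> 2 * \<mu> * V < 1 \<longrightarrow>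
        (\<integral>\<^sup>+\<omega>. ennreal (exp (\<mu> * (step_int W d \<omega>)\<^sup>2)) \<partial>M) \<le> ennreal (1 / sqrt (1 - 2 * \<mu> * V)))"
proof -
  interpret prob_space M using BM by (simp add: std_brownian_motion_def)
  define P where "P = (\<lambda>(c, a, b). a) ` set d \<union> (\<lambda>(c, a, b). b) ` set d"
  have finP: "finite P" by (simp add: P_def)
  have P01: "P \<subseteq> {0..1}" using d by (auto simp: P_def)
  define ps where "ps = sorted_list_of_set P"
  have ps: "sorted_wrt (<) ps" by (simp add: ps_def strict_sorted_list_of_set)
  have setps: "set ps = P" using finP by (simp add: ps_def)
  define m where "m = length ps - 1"
  define C where "C = coef d ps"
  define p where "p = (\<lambda>j. ps ! j)"
  have dP: "\<forall>(c, a, b)\<in>set d. a \<in> set ps \<and> b \<in> set ps \<and> a \<le> b"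
    using d by (force simp: setps P_def image_iff)
  have pmono: "p j < p (Suc j)" if "j < m" for j
    using that ps by (auto simp: p_def m_def intro: sorted_wrt_nth_less)
  have p01: "0 \<le> p j \<and> p (Suc j) \<le> 1" if "j < m" for j
  proof -
    have "p j \<in> P" "p (Suc j) \<in> P" using that setps by (auto simp: p_def m_def)
    then show ?thesis using P01 by auto
  qed
  have pord: "p i \<le> p j \<longleftrightarrow> i \<le> j" if "i \<le> m" "j \<le> m" "0 < m" for i j
    using sorted_nth_le_iff[OF ps, of i j] that by (auto simp: p_def m_def)
  have F1: "step_int W d \<omega> = (\<Sum>j<m. C j * (W (p (Suc j)) \<omega> - W (p j) \<omega>))" for \<omega>
    unfolding step_int_def using refine[OF ps dP, of "\<lambda>x. W x \<omega>"] by (simp add: C_def m_def p_def)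
  have F2: "step_fun d t = (\<Sum>j<m. C j * indicator {p j<..p (Suc j)} t)" for t
  proof -
    define G where "G = (\<lambda>x. if t \<le> x then 1 else 0 :: real)"
    have "step_fun d t = (\<Sum>(c, a, b)\<leftarrow>d. c * (G b - G a))"
      unfolding step_fun_def
      by (rule sum_list_map_cong) (use d in \<open>auto simp: G_def indicator_def\<close>)
    also have "\<dots> = (\<Sum>j<m. C j * (G (p (Suc j)) - G (p j)))"
      using refine[OF ps dP, of G] by (simp add: C_def m_def p_def)
    also have "\<dots> = (\<Sum>j<m. C j * indicator {p j<..p (Suc j)} t)"
      by (rule sum.cong) (auto simp: G_def indicator_def dest: pmono)
    finally show ?thesis .
  qed
  have disj: "j = k" if "j < m" "k < m" "t \<in> {p j<..p (Suc j)}" "t \<in> {p k<..p (Suc k)}" for j k t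
  proof (rule ccontr)
    assume "j \<noteq> k"
    then consider "Suc j \<le> k" | "Suc k \<le> j" by linarith
    then show False
    proof cases
      case 1 then have "p (Suc j) \<le> p k" using pord that by auto
      then show False using that by auto
    next
      case 2 then have "p (Suc k) \<le> p j" using pord that by auto
      then show False using that by auto
    qed
  qed
  have F3: "indicator {0..1} t * (step_fun d t)\<^sup>2 = (\<Sum>j<m. (C j)\<^sup>2 * indicator {p j<..p (Suc j)} t)" for t
  proof (cases "\<exists>j<m. t \<in> {p j<..p (Suc j)}")
    case True
    then obtain j where j: "j < m" "t \<in> {p j<..p (Suc j)}" by blast
    have eq: "(\<Sum>k<m. f k * indicator {p k<..p (Suc k)} t) = f j" for f :: "nat \<Rightarrow> real"
    proof -
      have "(\<Sum>k<m. f k * indicator {p k<..p (Suc k)} t) = (\<Sum>k<m. if k = j then f j else 0)"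
        by (rule sum.cong) (use disj j in \<open>auto simp: indicator_def\<close>)
      then show ?thesis using j by simp
    qed
    have "t \<in> {0..1}" using j p01[of j] by auto
    then show ?thesis unfolding F2 eq by simp
  next
    case False
    then have z: "\<And>k. k < m \<Longrightarrow> indicator {p k<..p (Suc k)} t = (0::real)" by (auto simp: indicator_def)
    have "(\<Sum>j<m. C j * indicator {p j<..p (Suc j)} t) = 0" by (rule sum.neutral) (simp add: z)
    moreover have "(\<Sum>j<m. (C j)\<^sup>2 * indicator {p j<..p (Suc j)} t) = 0" by (rule sum.neutral) (simp add: z)
    ultimately show ?thesis unfolding F2 by simp
  qed
  define V where "V = (\<Sum>j<m. (C j)\<^sup>2 * (p (Suc j) - p j))"
  have Vt0: "(C j)\<^sup>2 * (p (Suc j) - p j) \<ge> 0" if "j < m" for j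
    using pmono[OF that] by (intro mult_nonneg_nonneg) auto
  have V0: "V \<ge> 0" unfolding V_def using Vt0 by (intro sum_nonneg) auto
  have F4: "(\<integral>\<^sup>+t. ennreal (indicator {0..1} t * (step_fun d t)\<^sup>2) \<partial>lborel) = ennreal V"
  proof -
    have "(\<integral>\<^sup>+t. ennreal (indicator {0..1} t * (step_fun d t)\<^sup>2) \<partial>lborel)
        = (\<integral>\<^sup>+t. (\<Sum>j<m. ennreal ((C j)\<^sup>2) * indicator {p j<..p (Suc j)} t) \<partial>lborel)"
    proof (intro nn_integral_cong)
      fix t
      have "ennreal (\<Sum>j<m. (C j)\<^sup>2 * indicator {p j<..p (Suc j)} t) = (\<Sum>j<m. ennreal ((C j)\<^sup>2 * indicator {p j<..p (Suc j)} t))"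
        by (rule sum_ennreal[symmetric]) auto
      also have "\<dots> = (\<Sum>j<m. ennreal ((C j)\<^sup>2) * indicator {p j<..p (Suc j)} t)"
        by (intro sum.cong refl) (auto simp: indicator_def)
      finally show "ennreal (indicator {0..1} t * (step_fun d t)\<^sup>2) = (\<Sum>j<m. ennreal ((C j)\<^sup>2) * indicator {p j<..p (Suc j)} t)"
        unfolding F3 .
    qed
    also have "\<dots> = (\<Sum>j<m. ennreal ((C j)\<^sup>2) * emeasure lborel {p j<..p (Suc j)})"
      by (subst nn_integral_sum) (auto simp: nn_integral_cmult_indicator)
    also have "\<dots> = (\<Sum>j<m. ennreal ((C j)\<^sup>2 * (p (Suc j) - p j)))"
      by (rule sum.cong) (use pmono in \<open>auto simp: ennreal_mult less_imp_le\<close>)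
    also have "\<dots> = ennreal V" unfolding V_def using Vt0
      by (subst sum_ennreal) auto
    finally show ?thesis .
  qed
  define \<Delta> where "\<Delta> = (\<lambda>j \<omega>. W (p (Suc j)) \<omega> - W (p j) \<omega>)"
  have BMd: "\<forall>ts :: real list. sorted_wrt (<) ts \<longrightarrow> set ts \<subseteq> {0..1} \<longrightarrow>
        indep_vars (\<lambda>_. borel) (\<lambda>k \<omega>. W (ts ! Suc k) \<omega> - W (ts ! k) \<omega>) {..<length ts - 1}"
    "\<And>s t. 0 \<le> s \<Longrightarrow> s < t \<Longrightarrow> t \<le> 1 \<Longrightarrow>
        distributed M lborel (\<lambda>\<omega>. W t \<omega> - W s \<omega>) (normal_density 0 (sqrt (t - s)))"
    using BM unfolding std_brownian_motion_def by auto
  have ind: "indep_vars (\<lambda>_. borel) \<Delta> {..<m}"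
    using BMd(1)[rule_format, OF ps] setps P01 by (simp add: \<Delta>_def p_def m_def)
  have dist: "distributed M lborel (\<Delta> j) (normal_density 0 (sqrt (p (Suc j) - p j)))" if "j < m" for j
    unfolding \<Delta>_def using BMd(2)[of "p j" "p (Suc j)"] p01[OF that] pmono[OF that] by auto
  define J where "J = {j\<in>{..<m}. C j \<noteq> 0}"
  have finJ: "finite J" by (simp add: J_def)
  have SI: "step_int W d \<omega> = (\<Sum>j\<in>J. C j * \<Delta> j \<omega>)" for \<omega>
    unfolding F1 J_def \<Delta>_def by (subst sum.inter_filter) (auto intro: sum.cong)
  have VJ: "V = (\<Sum>j\<in>J. (C j)\<^sup>2 * (p (Suc j) - p j))"
    unfolding V_def J_def by (subst sum.inter_filter) (auto intro: sum.cong)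
  have F5: "(\<integral>\<^sup>+\<omega>. ennreal (exp (\<mu> * (step_int W d \<omega>)\<^sup>2)) \<partial>M) \<le> ennreal (1 / sqrt (1 - 2 * \<mu> * V))"
    if \<mu>: "0 \<le> \<mu>" "2 * \<mu> * V < 1" for \<mu>
  proof (cases "J = {}")
    case True
    then have "V = 0" "\<And>\<omega>. step_int W d \<omega> = 0" using VJ SI by auto
    then show ?thesis by (simp add: emeasure_space_1)
  next
    case False
    have ind2: "indep_vars (\<lambda>_. borel) (\<lambda>j \<omega>. C j * \<Delta> j \<omega>) J"
      by (rule indep_vars_compose2[OF indep_vars_subset[OF ind], where Y="\<lambda>j x. C j * x"])
         (auto simp: J_def)
    have dist2: "distributed M lborel (\<lambda>\<omega>. C j * \<Delta> j \<omega>) (normal_density 0 (\<bar>C j\<bar> * sqrt (p (Suc j) - p j)))"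
      if "j \<in> J" for j
    proof -
      have "j < m" "C j \<noteq> 0" using that by (auto simp: J_def)
      from normal_density_affine[OF dist[OF \<open>j < m\<close>] _ \<open>C j \<noteq> 0\<close>, of 0] pmono[OF \<open>j < m\<close>]
      show ?thesis by simp
    qed
    have pos: "0 < \<bar>C j\<bar> * sqrt (p (Suc j) - p j)" if "j \<in> J" for j
      using that pmono by (auto simp: J_def)
    have "distributed M lborel (\<lambda>\<omega>. \<Sum>j\<in>J. C j * \<Delta> j \<omega>)
        (normal_density (\<Sum>j\<in>J. 0) (sqrt (\<Sum>j\<in>J. (\<bar>C j\<bar> * sqrt (p (Suc j) - p j))\<^sup>2)))"
      by (rule sum_indep_normal[OF finJ False ind2 pos dist2])
    moreover have "(\<Sum>j\<in>J. (\<bar>C j\<bar> * sqrt (p (Suc j) - p j))\<^sup>2) = V"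
      unfolding VJ by (rule sum.cong) (use pmono in \<open>auto simp: J_def power_mult_distrib less_imp_le\<close>)
    ultimately have distS: "distributed M lborel (step_int W d) (normal_density 0 (sqrt V))"
      by (simp add: SI[abs_def])
    have Vpos: "0 < V"
    proof -
      have "0 < (\<Sum>j\<in>J. (\<bar>C j\<bar> * sqrt (p (Suc j) - p j))\<^sup>2)"
      proof (rule sum_pos[OF finJ False])
        fix j assume "j \<in> J"
        from pos[OF this] show "0 < (\<bar>C j\<bar> * sqrt (p (Suc j) - p j))\<^sup>2" by (rule zero_less_power)
      qed
      then show ?thesis using \<open>(\<Sum>j\<in>J. (\<bar>C j\<bar> * sqrt (p (Suc j) - p j))\<^sup>2) = V\<close> by simp
    qed
    show ?thesis
      using gauss_mgf[OF prob_space_axioms distS, of \<mu>] Vpos \<mu> by simp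
  qed
  show ?thesis using V0 F4 F5 by blast
qed

lemma two_mul_le: fixes h e \<epsilon> :: real assumes "0 < \<epsilon>"
  shows "2 * h * e \<le> \<epsilon> * h\<^sup>2 + e\<^sup>2 / \<epsilon>" "- (2 * h * e) \<le> \<epsilon> * h\<^sup>2 + e\<^sup>2 / \<epsilon>"
proof -
  have "0 \<le> (\<epsilon> * h - e)\<^sup>2 / \<epsilon>" "0 \<le> (\<epsilon> * h + e)\<^sup>2 / \<epsilon>" using assms by auto
  moreover have "(\<epsilon> * h - e)\<^sup>2 / \<epsilon> = \<epsilon> * h\<^sup>2 + e\<^sup>2 / \<epsilon> - 2 * h * e"
    "(\<epsilon> * h + e)\<^sup>2 / \<epsilon> = \<epsilon> * h\<^sup>2 + e\<^sup>2 / \<epsilon> + 2 * h * e"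
    using assms by (simp_all add: field_simps power2_eq_square)
  ultimately show "2 * h * e \<le> \<epsilon> * h\<^sup>2 + e\<^sup>2 / \<epsilon>" "- (2 * h * e) \<le> \<epsilon> * h\<^sup>2 + e\<^sup>2 / \<epsilon>" by linarith+
qed

lemma sq_bounds: fixes s h \<epsilon> :: real assumes "0 < \<epsilon>"
  shows "s\<^sup>2 \<le> h\<^sup>2 + \<epsilon> * h\<^sup>2 + (1 + 1/\<epsilon>) * (s - h)\<^sup>2"
    "h\<^sup>2 \<le> s\<^sup>2 + \<epsilon> * h\<^sup>2 + (1 + 1/\<epsilon>) * (s - h)\<^sup>2"
proof -
  have e: "s\<^sup>2 = h\<^sup>2 + 2 * h * (s - h) + (s - h)\<^sup>2" by (simp add: power2_eq_square algebra_simps)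
  have d: "(1 + 1/\<epsilon>) * (s - h)\<^sup>2 = (s - h)\<^sup>2 + (s - h)\<^sup>2 / \<epsilon>" by (simp add: field_simps)
  show "s\<^sup>2 \<le> h\<^sup>2 + \<epsilon> * h\<^sup>2 + (1 + 1/\<epsilon>) * (s - h)\<^sup>2"
    using two_mul_le(1)[OF assms, of h "s - h"] unfolding d by (subst e) linarith
  show "h\<^sup>2 \<le> s\<^sup>2 + \<epsilon> * h\<^sup>2 + (1 + 1/\<epsilon>) * (s - h)\<^sup>2"
    using two_mul_le(2)[OF assms, of h "s - h"] zero_le_power2[of "s - h"] unfolding d by (subst e) linarith
qed

lemma L2_norm_conv:
  fixes s :: "nat \<Rightarrow> real \<Rightarrow> real" and h :: "real \<Rightarrow> real"
  assumes meas: "\<And>k. s k \<in> borel_measurable borel" "h \<in> borel_measurable borel" "A \<in> sets borel"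
    and conv: "(\<lambda>k. \<integral>\<^sup>+t. ennreal (indicator A t * (s k t - h t)\<^sup>2) \<partial>lborel) \<longlonglongrightarrow> 0"
    and hS: "(\<integral>\<^sup>+t. ennreal (indicator A t * (h t)\<^sup>2) \<partial>lborel) = ennreal S"
    and sV: "\<And>k. (\<integral>\<^sup>+t. ennreal (indicator A t * (s k t)\<^sup>2) \<partial>lborel) = ennreal (V k)"
    and S0: "0 \<le> S" and V0: "\<And>k. 0 \<le> V k"
  shows "V \<longlonglongrightarrow> S"
proof -
  define D where "D k = (\<integral>\<^sup>+t. ennreal (indicator A t * (s k t - h t)\<^sup>2) \<partial>lborel)" for k
  have bnd: "ennreal (V k) \<le> ennreal S + ennreal (\<epsilon> * S) + ennreal (1 + 1/\<epsilon>) * D k"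
    "ennreal S \<le> ennreal (V k) + ennreal (\<epsilon> * S) + ennreal (1 + 1/\<epsilon>) * D k" if "0 < \<epsilon>" for \<epsilon> k
  proof -
    let ?H = "\<lambda>t. ennreal (indicator A t * (h t)\<^sup>2)"
    let ?S = "\<lambda>t. ennreal (indicator A t * (s k t)\<^sup>2)"
    let ?E = "\<lambda>t. ennreal (indicator A t * (s k t - h t)\<^sup>2)"
    have p1: "?S t \<le> ?H t + ennreal \<epsilon> * ?H t + ennreal (1 + 1/\<epsilon>) * ?E t" for t
    proof -
      have "indicator A t * (s k t)\<^sup>2 \<le> indicator A t * (h t)\<^sup>2 + \<epsilon> * (indicator A t * (h t)\<^sup>2) + (1 + 1/\<epsilon>) * (indicator A t * (s k t - h t)\<^sup>2)"
        using sq_bounds(1)[OF that, where s="s k t" and h="h t"] by (auto simp: indicator_def)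
      then show ?thesis using that
        by (simp add: ennreal_plus[symmetric] ennreal_mult[symmetric] ennreal_leI del: ennreal_plus)
    qed
    have p2: "?H t \<le> ?S t + ennreal \<epsilon> * ?H t + ennreal (1 + 1/\<epsilon>) * ?E t" for t
    proof -
      have "indicator A t * (h t)\<^sup>2 \<le> indicator A t * (s k t)\<^sup>2 + \<epsilon> * (indicator A t * (h t)\<^sup>2) + (1 + 1/\<epsilon>) * (indicator A t * (s k t - h t)\<^sup>2)"
        using sq_bounds(2)[OF that, where s="s k t" and h="h t"] by (auto simp: indicator_def)
      then show ?thesis using that
        by (simp add: ennreal_plus[symmetric] ennreal_mult[symmetric] ennreal_leI del: ennreal_plus)
    qed
    have m: "?H \<in> borel_measurable lborel" "?S \<in> borel_measurable lborel" "?E \<in> borel_measurable lborel"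
      using meas by auto
    have "ennreal (V k) \<le> (\<integral>\<^sup>+t. ?H t + ennreal \<epsilon> * ?H t + ennreal (1 + 1/\<epsilon>) * ?E t \<partial>lborel)"
      unfolding sV[symmetric] by (intro nn_integral_mono p1)
    also have "\<dots> = ennreal S + ennreal \<epsilon> * ennreal S + ennreal (1 + 1/\<epsilon>) * D k"
      using m by (simp add: nn_integral_add nn_integral_cmult hS D_def)
    finally show "ennreal (V k) \<le> ennreal S + ennreal (\<epsilon> * S) + ennreal (1 + 1/\<epsilon>) * D k"
      using that S0 by (simp add: ennreal_mult)
    have "ennreal S \<le> (\<integral>\<^sup>+t. ?S t + ennreal \<epsilon> * ?H t + ennreal (1 + 1/\<epsilon>) * ?E t \<partial>lborel)"
      unfolding hS[symmetric] by (intro nn_integral_mono p2)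
    also have "\<dots> = ennreal (V k) + ennreal \<epsilon> * ennreal S + ennreal (1 + 1/\<epsilon>) * D k"
      using m by (simp add: nn_integral_add nn_integral_cmult hS sV D_def)
    finally show "ennreal S \<le> ennreal (V k) + ennreal (\<epsilon> * S) + ennreal (1 + 1/\<epsilon>) * D k"
      using that S0 by (simp add: ennreal_mult)
  qed
  show ?thesis
  proof (rule LIMSEQ_I)
    fix r :: real assume r: "0 < r"
    define \<epsilon> where "\<epsilon> = r / (2 * (S + 1))"
    have \<epsilon>: "0 < \<epsilon>" "\<epsilon> * S < r / 2" using r S0 by (auto simp: \<epsilon>_def field_simps)
    define \<delta> where "\<delta> = r / 2 / (1 + 1/\<epsilon>)"
    have "0 < 1 + 1/\<epsilon>" using \<epsilon> by (simp add: add_pos_pos)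
    then have \<delta>: "0 < \<delta>" using r unfolding \<delta>_def by (intro divide_pos_pos) auto
    have "eventually (\<lambda>k. D k < ennreal \<delta>) sequentially"
      using order_tendstoD(2)[OF conv[folded D_def], of "ennreal \<delta>"] \<delta> by auto
    then obtain K where K: "\<And>k. k \<ge> K \<Longrightarrow> D k < ennreal \<delta>" by (auto simp: eventually_sequentially)
    show "\<exists>K. \<forall>k\<ge>K. norm (V k - S) < r"
    proof (intro exI allI impI)
      fix k assume "K \<le> k"
      then have Dk: "D k < ennreal \<delta>" by (rule K)
      then obtain dk where dk: "D k = ennreal dk" "0 \<le> dk" "dk < \<delta>"
        by (metis ennreal_cases ennreal_less_iff ennreal_less_top infinity_ennreal_def less_imp_le not_less_iff_gr_or_eq top_greatest)
      have c: "0 \<le> 1 + 1/\<epsilon>" using \<epsilon> by simp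
      have eqk: "ennreal (x + \<epsilon> * S + (1 + 1/\<epsilon>) * dk) = ennreal x + ennreal (\<epsilon> * S) + ennreal (1 + 1/\<epsilon>) * D k"
        if "0 \<le> x" for x
        using that S0 \<epsilon> dk c by (simp add: ennreal_plus ennreal_mult)
      have "ennreal (V k) \<le> ennreal (S + \<epsilon> * S + (1 + 1/\<epsilon>) * dk)"
        using bnd(1)[OF \<epsilon>(1), of k] eqk[OF S0] by simp
      then have 1: "V k \<le> S + \<epsilon> * S + (1 + 1/\<epsilon>) * dk"
        using S0 \<epsilon> dk c by (subst (asm) ennreal_le_iff) auto
      have "ennreal S \<le> ennreal (V k + \<epsilon> * S + (1 + 1/\<epsilon>) * dk)"
        using bnd(2)[OF \<epsilon>(1), of k] eqk[OF V0[of k]] by simp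
      then have 2: "S \<le> V k + \<epsilon> * S + (1 + 1/\<epsilon>) * dk"
        using S0 \<epsilon> dk c V0[of k] by (subst (asm) ennreal_le_iff) auto
      have "(1 + 1/\<epsilon>) * dk < r / 2" using dk \<epsilon> unfolding \<delta>_def by (simp add: field_simps)
      note a = this
      have "V k - S < r" using 1 a \<epsilon>(2) by linarith
      moreover have "S - V k < r" using 2 a \<epsilon>(2) by linarith
      ultimately show "norm (V k - S) < r" by (simp add: abs_less_iff)
    qed
  qed
qed

lemma periodic_int:
  fixes G :: "real \<Rightarrow> 'b"
  assumes per: "\<And>x. G (x + 1) = G x"
  shows "G (x + of_int m) = G x"
proof (induction m rule: int_induct[where k=0])
  case base then show ?case by simp
next
  case (step1 i) then show ?case using per[of "x + of_int i"] by (simp add: add.assoc)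
next
  case (step2 i) then show ?case using per[of "x + of_int (i - 1)"] by (simp add: add.assoc)
qed

lemma periodic_shift_ho:
  fixes G :: "real \<Rightarrow> ennreal"
  assumes per: "\<And>x. G (x + 1) = G x" and [measurable]: "G \<in> borel_measurable borel"
  shows "(\<integral>\<^sup>+x. indicator {a..<a+1} x * G x \<partial>lborel) = (\<integral>\<^sup>+x. indicator {0..<1} x * G x \<partial>lborel)"
proof -
  define m where "m = \<lfloor>a\<rfloor>"
  define r where "r = a - of_int m"
  have r: "0 \<le> r" "r < 1" unfolding r_def m_def by linarith+
  have "(\<integral>\<^sup>+x. indicator {a..<a+1} x * G x \<partial>lborel)
      = (\<integral>\<^sup>+y. indicator {a..<a+1} (of_int m + 1 * y) * G (of_int m + 1 * y) \<partial>lborel)"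
    by (subst nn_integral_real_affine[where c=1 and t="of_int m"]) auto
  also have "\<dots> = (\<integral>\<^sup>+y. indicator {r..<r+1} y * G y \<partial>lborel)"
  proof (intro nn_integral_cong)
    fix y
    have "G (of_int m + 1 * y) = G y" using periodic_int[of G y m, OF per] by (simp add: add.commute)
    moreover have "indicator {a..<a+1} (of_int m + 1 * y) = (indicator {r..<r+1} y :: ennreal)"
      by (auto simp: indicator_def r_def)
    ultimately show "indicator {a..<a+1} (of_int m + 1 * y) * G (of_int m + 1 * y) = indicator {r..<r+1} y * G y"
      by simp
  qed
  also have "\<dots> = (\<integral>\<^sup>+y. indicator {r..<1} y * G y + indicator {1..<r+1} y * G y \<partial>lborel)"
    by (intro nn_integral_cong) (use r in \<open>auto simp: indicator_def\<close>)
  also have "\<dots> = (\<integral>\<^sup>+y. indicator {r..<1} y * G y \<partial>lborel) + (\<integral>\<^sup>+y. indicator {1..<r+1} y * G y \<partial>lborel)"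
    by (rule nn_integral_add) auto
  also have "(\<integral>\<^sup>+y. indicator {1..<r+1} y * G y \<partial>lborel)
      = (\<integral>\<^sup>+z. indicator {1..<r+1} (1 + 1 * z) * G (1 + 1 * z) \<partial>lborel)"
    by (subst nn_integral_real_affine[where c=1 and t=1]) auto
  also have "\<dots> = (\<integral>\<^sup>+z. indicator {0..<r} z * G z \<partial>lborel)"
  proof (intro nn_integral_cong)
    fix z
    have "G (1 + 1 * z) = G z" using per[of z] by (simp add: add.commute)
    then show "indicator {1..<r+1} (1 + 1 * z) * G (1 + 1 * z) = indicator {0..<r} z * G z"
      by (auto simp: indicator_def)
  qed
  also have "(\<integral>\<^sup>+y. indicator {r..<1} y * G y \<partial>lborel) + (\<integral>\<^sup>+z. indicator {0..<r} z * G z \<partial>lborel)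
      = (\<integral>\<^sup>+y. indicator {r..<1} y * G y + indicator {0..<r} y * G y \<partial>lborel)"
    by (rule nn_integral_add[symmetric]) auto
  also have "\<dots> = (\<integral>\<^sup>+x. indicator {0..<1} x * G x \<partial>lborel)"
    by (intro nn_integral_cong) (use r in \<open>auto simp: indicator_def\<close>)
  finally show ?thesis .
qed

lemma periodic_shift:
  fixes F :: "real \<Rightarrow> real"
  assumes per: "\<And>x. F (x + 1) = F x" and [measurable]: "F \<in> borel_measurable borel"
  shows "(\<integral>\<^sup>+t. ennreal (indicator {0..1} t * F (t - \<tau>)) \<partial>lborel) = (\<integral>\<^sup>+t. ennreal (indicator {0..1} t * F t) \<partial>lborel)"
proof -
  define G where "G = (\<lambda>x. ennreal (F x))"
  have Gper: "G (x + 1) = G x" for x using per by (simp add: G_def)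
  have [measurable]: "G \<in> borel_measurable borel" unfolding G_def by measurable
  have cl: "(\<integral>\<^sup>+t. ennreal (indicator {0..1} t * F (t - c)) \<partial>lborel) = (\<integral>\<^sup>+t. indicator {0..<1} t * G (t - c) \<partial>lborel)" for c
  proof (rule nn_integral_cong_AE)
    show "AE t in lborel. ennreal (indicator {0..1} t * F (t - c)) = indicator {0..<1} t * G (t - c)"
      using AE_lborel_singleton[of 1] by eventually_elim (auto simp: indicator_def G_def)
  qed
  have "(\<integral>\<^sup>+t. indicator {0..<1} t * G (t - \<tau>) \<partial>lborel)
      = (\<integral>\<^sup>+x. indicator {0..<1} (\<tau> + 1 * x) * G (\<tau> + 1 * x - \<tau>) \<partial>lborel)"
    by (subst nn_integral_real_affine[where c=1 and t=\<tau>]) auto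
  also have "\<dots> = (\<integral>\<^sup>+x. indicator {-\<tau>..<-\<tau>+1} x * G x \<partial>lborel)"
    by (intro nn_integral_cong) (auto simp: indicator_def)
  also have "\<dots> = (\<integral>\<^sup>+x. indicator {0..<1} x * G x \<partial>lborel)"
    by (rule periodic_shift_ho[of G, OF Gper]) auto
  finally show ?thesis using cl[of \<tau>] cl[of 0] by simp
qed

lemma jensen_exp:
  fixes g \<phi> :: "real \<Rightarrow> real"
  assumes [measurable]: "g \<in> borel_measurable lborel" "\<phi> \<in> borel_measurable lborel"
    and g0: "\<And>x. 0 \<le> g x" and gi: "integrable lborel g" and g1: "integral\<^sup>L lborel g = 1"
    and \<phi>0: "\<And>x. 0 \<le> \<phi> x"
    and m: "ennreal m \<le> (\<integral>\<^sup>+x. ennreal (g x * \<phi> x) \<partial>lborel)"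
  shows "ennreal (exp m) \<le> (\<integral>\<^sup>+x. ennreal (g x * exp (\<phi> x)) \<partial>lborel)"
proof (cases "(\<integral>\<^sup>+x. ennreal (g x * exp (\<phi> x)) \<partial>lborel) = \<top>")
  case True then show ?thesis by simp
next
  case False
  have ie: "integrable lborel (\<lambda>x. g x * exp (\<phi> x))"
    using False g0 by (subst integrable_iff_bounded) (auto simp: top.not_eq_extremum)
  have le: "g x * \<phi> x \<le> g x * exp (\<phi> x)" for x
  proof -
    have "\<phi> x \<le> exp (\<phi> x)" using exp_ge_add_one_self[of "\<phi> x"] by linarith
    then show ?thesis using g0[of x] by (intro mult_left_mono) auto
  qed
  have ip: "integrable lborel (\<lambda>x. g x * \<phi> x)"
    by (rule Bochner_Integration.integrable_bound[OF ie]) (use le g0 \<phi>0 in auto)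
  have "(\<integral>\<^sup>+x. ennreal (g x * \<phi> x) \<partial>lborel) = ennreal (\<integral>x. g x * \<phi> x \<partial>lborel)"
    using ip g0 \<phi>0 by (intro nn_integral_eq_integral) auto
  moreover have I0: "0 \<le> (\<integral>x. g x * \<phi> x \<partial>lborel)"
    using g0 \<phi>0 by (intro integral_nonneg_AE) auto
  ultimately have mle: "m \<le> (\<integral>x. g x * \<phi> x \<partial>lborel)"
    using m by (cases "m \<le> 0") (auto simp: ennreal_le_iff)
  have pt: "exp m * (1 - m) * g x + exp m * (g x * \<phi> x) \<le> g x * exp (\<phi> x)" for x
  proof -
    have "exp m * (1 + (\<phi> x - m)) \<le> exp m * exp (\<phi> x - m)"
      using exp_ge_add_one_self[of "\<phi> x - m"] by simp
    also have "\<dots> = exp (\<phi> x)" by (simp add: exp_diff)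
    finally have "g x * (exp m * (1 + (\<phi> x - m))) \<le> g x * exp (\<phi> x)"
      using g0[of x] by (intro mult_left_mono) auto
    then show ?thesis by (simp add: algebra_simps)
  qed
  have "exp m \<le> exp m * (1 - m) * 1 + exp m * (\<integral>x. g x * \<phi> x \<partial>lborel)"
    using mle by (simp add: algebra_simps)
  also have "\<dots> = (\<integral>x. exp m * (1 - m) * g x + exp m * (g x * \<phi> x) \<partial>lborel)"
    using gi ip g1 by simp
  also have "\<dots> \<le> (\<integral>x. g x * exp (\<phi> x) \<partial>lborel)"
  proof (rule integral_mono)
    show "integrable lborel (\<lambda>x. exp m * (1 - m) * g x + exp m * (g x * \<phi> x))"
      using gi ip by (intro Bochner_Integration.integrable_add Bochner_Integration.integrable_mult_right)
  qed (use ie pt in auto)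
  finally have "ennreal (exp m) \<le> ennreal (\<integral>x. g x * exp (\<phi> x) \<partial>lborel)" by (rule ennreal_leI)
  also have "\<dots> = (\<integral>\<^sup>+x. ennreal (g x * exp (\<phi> x)) \<partial>lborel)"
    using ie g0 by (intro nn_integral_eq_integral[symmetric]) auto
  finally show ?thesis .
qed

lemma ln_le_half: fixes x :: real assumes "1 \<le> x" shows "ln x \<le> (x - 1/x) / 2"
proof -
  let ?f = "\<lambda>y::real. (y - 1/y) / 2 - ln y"
  have "?f 1 \<le> ?f x"
  proof (rule DERIV_nonneg_imp_nondecreasing[OF assms])
    fix y :: real assume y: "1 \<le> y" "y \<le> x"
    have "DERIV ?f y :> (1 - (- (1 / y\<^sup>2))) / 2 - 1 / y"
      using y by (auto intro!: derivative_eq_intros simp: power2_eq_square)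
    moreover have "(1 - (- (1 / y\<^sup>2))) / 2 - 1 / y = (y - 1)\<^sup>2 / (2 * y\<^sup>2)"
      using y by (simp add: field_simps power2_eq_square)
    ultimately show "\<exists>d. DERIV ?f y :> d \<and> d \<ge> 0" by auto
  qed
  then show ?thesis by simp
qed

lemma final_bound:
  fixes n :: nat and S \<alpha> :: real
  assumes n: "0 < n" and S: "0 < S" and \<alpha>: "0 < \<alpha>"
  defines "lm \<equiv> 2 * \<alpha> / (real n * S\<^sup>2 + 2 * \<alpha> * S)"
  shows "0 \<le> lm" "lm * S < 1"
    "exp (- lm * (\<alpha> + real n * S / 2)) * (1 / sqrt (1 - lm * S)) ^ n
       \<le> exp (- \<alpha>\<^sup>2 / (real n * S\<^sup>2 + 2 * \<alpha> * S))"
proof -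
  define D where "D = real n * S\<^sup>2 + 2 * \<alpha> * S"
  have nS: "0 < real n * S\<^sup>2" using n S by simp
  have D: "0 < D" using nS S \<alpha> unfolding D_def by (simp add: add_pos_pos)
  have lam: "lm = 2 * \<alpha> / D" by (simp add: lm_def D_def)
  show "0 \<le> lm" using D \<alpha> by (simp add: lam)
  have "1 - lm * S = (D - 2 * \<alpha> * S) / D" using D by (simp add: lam field_simps)
  also have "D - 2 * \<alpha> * S = real n * S\<^sup>2" by (simp add: D_def)
  finally have q: "1 - lm * S = real n * S\<^sup>2 / D" .
  have "0 < real n * S\<^sup>2 / D" using nS D by simp
  then show "lm * S < 1" using q by linarith
  define x where "x = D / (real n * S\<^sup>2)"
  have x1: "1 \<le> x" unfolding x_def using nS S \<alpha> by (subst le_divide_eq_1_pos) (auto simp: D_def)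
  have x0: "0 < x" using x1 by simp
  have sx: "1 / sqrt (1 - lm * S) = sqrt x" unfolding q x_def using nS D
    by (simp add: real_sqrt_divide)
  have "sqrt x ^ n = exp (real n * (ln x / 2))"
  proof -
    have "sqrt x = exp (ln x / 2)" using x0 powr_half_sqrt[of x] by (simp add: powr_def)
    then show ?thesis by (simp add: exp_of_nat_mult[symmetric])
  qed
  then have "exp (- lm * (\<alpha> + real n * S / 2)) * (1 / sqrt (1 - lm * S)) ^ n
      = exp (- lm * (\<alpha> + real n * S / 2) + real n * (ln x / 2))" by (simp add: sx mult_exp_exp)
  also have "\<dots> \<le> exp (- lm * (\<alpha> + real n * S / 2) + real n * ((x - 1/x) / 4))"
    using ln_le_half[OF x1] n by simp
  also have "- lm * (\<alpha> + real n * S / 2) + real n * ((x - 1/x) / 4) = - \<alpha>\<^sup>2 / D"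
  proof -
    have N: "real n \<noteq> 0" "S \<noteq> 0" "D \<noteq> 0" using n S D by auto
    have D': "D = real n * S\<^sup>2 + 2 * \<alpha> * S" by (simp add: D_def)
    show ?thesis unfolding lam x_def using N
      by (simp add: field_simps power2_eq_square) (simp add: D' algebra_simps power2_eq_square)
  qed
  finally show "exp (- lm * (\<alpha> + real n * S / 2)) * (1 / sqrt (1 - lm * S)) ^ n
       \<le> exp (- \<alpha>\<^sup>2 / (real n * S\<^sup>2 + 2 * \<alpha> * S))" by (simp add: D_def)
qed

lemma L1_AE_subseq:
  assumes "prob_space M" and [measurable]: "\<And>k. Z k \<in> borel_measurable M"
    and Z0: "\<And>k \<omega>. 0 \<le> Z k \<omega>"
    and lim: "(\<lambda>k. \<integral>\<^sup>+\<omega>. ennreal (Z k \<omega>) \<partial>M) \<longlonglongrightarrow> 0"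
  shows "\<exists>r. strict_mono r \<and> (AE \<omega> in M. (\<lambda>k. Z (r k) \<omega>) \<longlonglongrightarrow> 0)"
proof -
  interpret prob_space M by fact
  define u where "u k \<omega> = min (Z k \<omega>) 1" for k \<omega>
  have [measurable]: "u k \<in> borel_measurable M" for k unfolding u_def by measurable
  have ui: "integrable M (u k)" for k
    by (rule integrable_const_bound[where B=1]) (auto simp: u_def Z0)
  have u0: "0 \<le> u k \<omega>" for k \<omega> using Z0 by (simp add: u_def)
  have "(\<lambda>k. ennreal (\<integral>\<omega>. u k \<omega> \<partial>M)) \<longlonglongrightarrow> 0"
  proof (rule tendsto_sandwich[OF _ _ tendsto_const lim])
    show "\<forall>\<^sub>F k in sequentially. 0 \<le> ennreal (\<integral>\<omega>. u k \<omega> \<partial>M)" by simp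
    show "\<forall>\<^sub>F k in sequentially. ennreal (\<integral>\<omega>. u k \<omega> \<partial>M) \<le> (\<integral>\<^sup>+\<omega>. ennreal (Z k \<omega>) \<partial>M)"
    proof (intro always_eventually allI)
      fix k
      have "ennreal (\<integral>\<omega>. u k \<omega> \<partial>M) = (\<integral>\<^sup>+\<omega>. ennreal (u k \<omega>) \<partial>M)"
        using ui u0 by (intro nn_integral_eq_integral[symmetric]) auto
      also have "\<dots> \<le> (\<integral>\<^sup>+\<omega>. ennreal (Z k \<omega>) \<partial>M)"
        by (intro nn_integral_mono ennreal_leI) (auto simp: u_def)
      finally show "ennreal (\<integral>\<omega>. u k \<omega> \<partial>M) \<le> (\<integral>\<^sup>+\<omega>. ennreal (Z k \<omega>) \<partial>M)" .
    qed
  qed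
  then have "(\<lambda>k. (\<integral>\<omega>. u k \<omega> \<partial>M)) \<longlonglongrightarrow> 0"
    using u0 by (subst (asm) ennreal_0[symmetric], subst (asm) tendsto_ennreal_iff)
      (auto intro: integral_nonneg_AE)
  moreover have "(\<integral>\<omega>. norm (u k \<omega>) \<partial>M) = (\<integral>\<omega>. u k \<omega> \<partial>M)" for k using u0 by simp
  ultimately obtain r where r: "strict_mono r" "AE \<omega> in M. (\<lambda>k. u (r k) \<omega>) \<longlonglongrightarrow> 0"
    using tendsto_L1_AE_subseq[of M u] ui by auto
  have "AE \<omega> in M. (\<lambda>k. Z (r k) \<omega>) \<longlonglongrightarrow> 0"
    using r(2)
  proof eventually_elim
    case (elim \<omega>)
    have "eventually (\<lambda>k. u (r k) \<omega> < 1) sequentially"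
      using order_tendstoD(2)[OF elim] by simp
    then have "eventually (\<lambda>k. u (r k) \<omega> = Z (r k) \<omega>) sequentially"
      by eventually_elim (auto simp: u_def)
    then show ?case using elim by (rule Lim_transform_eventually[rotated])
  qed
  then show ?thesis using r(1) by blast
qed

definition psum :: "(real \<times> real \<times> real) list \<Rightarrow> (real \<Rightarrow> real) \<Rightarrow> real" where
  "psum d p = (\<Sum>(c, a, b)\<leftarrow>d. c * (p b - p a))"

lemma step_int_psum: "step_int W d \<omega> = psum d (\<lambda>t. W t \<omega>)"
  by (simp add: step_int_def psum_def)

lemma psum_restrict:
  assumes "\<forall>(c, a, b)\<in>set d. a \<in> I \<and> b \<in> I"
  shows "psum d (restrict F I) = psum d F"
  unfolding psum_def using assms by (intro arg_cong[where f=sum_list] map_cong) auto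

lemma psum_measurable:
  assumes "\<forall>(c, a, b)\<in>set d. a \<in> I \<and> b \<in> I"
  shows "psum d \<in> borel_measurable (Pi\<^sub>M I (\<lambda>_. borel))"
  using assms
proof (induction d)
  case Nil then show ?case by (simp add: psum_def)
next
  case (Cons x d)
  obtain c a b where x: "x = (c, a, b)" by (cases x) auto
  have "a \<in> I" "b \<in> I" using Cons.prems x by auto
  have eq: "psum (x # d) = (\<lambda>p. c * (p b - p a) + psum d p)" by (simp add: psum_def x fun_eq_iff)
  have "psum d \<in> borel_measurable (Pi\<^sub>M I (\<lambda>_. borel))" using Cons by auto
  then show ?case unfolding eq using \<open>a \<in> I\<close> \<open>b \<in> I\<close> by measurable
qed

lemma step_int_measurable:
  assumes "\<forall>(c, a, b)\<in>set d. W a \<in> borel_measurable M \<and> W b \<in> borel_measurable M"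
  shows "step_int W d \<in> borel_measurable M"
  using assms
proof (induction d)
  case Nil then show ?case by (simp add: step_int_def)
next
  case (Cons x d)
  obtain c a b where x: "x = (c, a, b)" by (cases x) auto
  have m: "W a \<in> borel_measurable M" "W b \<in> borel_measurable M" using Cons.prems x by auto
  have eq: "step_int W (x # d) = (\<lambda>\<omega>. c * (W b \<omega> - W a \<omega>) + step_int W d \<omega>)"
    by (simp add: step_int_def x fun_eq_iff)
  have "step_int W d \<in> borel_measurable M" using Cons by auto
  then show ?case unfolding eq using m by measurable
qed

lemma step_fun_measurable: "step_fun d \<in> borel_measurable borel"
proof (induction d)
  case Nil then show ?case by (simp add: step_fun_def)
next
  case (Cons x d)
  obtain c a b where x: "x = (c, a, b)" by (cases x) auto
  have eq: "step_fun (x # d) = (\<lambda>t. c * indicator {a<..b} t + step_fun d t)"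
    by (simp add: step_fun_def x fun_eq_iff)
  show ?case unfolding eq using Cons by measurable
qed

lemma integral_le_nn:
  fixes f :: "'a \<Rightarrow> real"
  assumes "f \<in> borel_measurable M" "\<And>x. 0 \<le> f x"
  shows "ennreal (integral\<^sup>L M f) \<le> (\<integral>\<^sup>+x. ennreal (f x) \<partial>M)"
proof (cases "integrable M f")
  case True then show ?thesis using assms by (subst nn_integral_eq_integral) auto
next
  case False then show ?thesis by (simp add: not_integrable_integral_eq)
qed

lemma key_tau:
  fixes M :: "'a measure" and W :: "nat \<Rightarrow> real \<Rightarrow> 'a \<Rightarrow> real" and X :: "nat \<Rightarrow> 'a \<Rightarrow> real"
    and f :: "real \<Rightarrow> real"
  assumes prob: "prob_space M"
    and BM: "\<And>i. i \<in> {1..n} \<Longrightarrow> std_brownian_motion M (W i)"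
    and indep: "prob_space.indep_vars M (\<lambda>_. Pi\<^sub>M {0..1} (\<lambda>_. borel))
                  (\<lambda>i \<omega>. restrict (\<lambda>t. W i t \<omega>) {0..1}) {1..n}"
    and f_meas: "f \<in> borel_measurable lborel"
    and f_per: "\<And>x. f (x + 1) = f x"
    and SE: "(\<integral>\<^sup>+t. ennreal (indicator {0..1} t * (f t)\<^sup>2) \<partial>lborel) = ennreal S" and S0: "0 \<le> S"
    and X_ito: "\<And>i. i \<in> {1..n} \<Longrightarrow> is_ito_integral M (W i) (\<lambda>t. f (t - \<tau>)) (X i)"
    and \<mu>: "0 \<le> \<mu>" "2 * \<mu> * S < 1"
  shows "(\<integral>\<^sup>+\<omega>. ennreal (exp (\<mu> * (\<Sum>i\<in>{1..n}. (X i \<omega>)\<^sup>2))) \<partial>M) \<le> ennreal ((1 / sqrt (1 - 2 * \<mu> * S)) ^ n)"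
proof -
  interpret prob_space M by fact
  have f_meas': "f \<in> borel_measurable borel" using f_meas by simp
  have Xm: "X i \<in> borel_measurable M" if "i \<in> {1..n}" for i
    using X_ito[OF that] by (simp add: is_ito_integral_def)
  have "\<forall>i\<in>{1..n}. \<exists>d :: nat \<Rightarrow> (real \<times> real \<times> real) list.
        (\<forall>k. \<forall>(c, a, b) \<in> set (d k). 0 \<le> a \<and> a \<le> b \<and> b \<le> 1) \<and>
        ((\<lambda>k. \<integral>\<^sup>+ t. ennreal (indicator {0..1} t * (step_fun (d k) t - f (t - \<tau>))\<^sup>2) \<partial>lborel)
            \<longlonglongrightarrow> 0) \<and>
        ((\<lambda>k. \<integral>\<^sup>+ \<omega>. ennreal ((step_int (W i) (d k) \<omega> - X i \<omega>)\<^sup>2) \<partial>M) \<longlonglongrightarrow> 0)"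
    using X_ito unfolding is_ito_integral_def by blast
  from bchoice[OF this] obtain D where D: "\<forall>i\<in>{1..n}.
        (\<forall>k. \<forall>(c, a, b) \<in> set (D i k). 0 \<le> a \<and> a \<le> b \<and> b \<le> 1) \<and>
        ((\<lambda>k. \<integral>\<^sup>+ t. ennreal (indicator {0..1} t * (step_fun (D i k) t - f (t - \<tau>))\<^sup>2) \<partial>lborel)
            \<longlonglongrightarrow> 0) \<and>
        ((\<lambda>k. \<integral>\<^sup>+ \<omega>. ennreal ((step_int (W i) (D i k) \<omega> - X i \<omega>)\<^sup>2) \<partial>M) \<longlonglongrightarrow> 0)" by blast
  have D01: "\<forall>(c, a, b) \<in> set (D i k). 0 \<le> a \<and> a \<le> b \<and> b \<le> 1" if "i \<in> {1..n}" for i k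
    using D that by blast
  define Y where "Y i k = step_int (W i) (D i k)" for i k
  define V where "V i k = enn2real (\<integral>\<^sup>+t. ennreal (indicator {0..1} t * (step_fun (D i k) t)\<^sup>2) \<partial>lborel)" for i k
  have VY: "(\<integral>\<^sup>+t. ennreal (indicator {0..1} t * (step_fun (D i k) t)\<^sup>2) \<partial>lborel) = ennreal (V i k)
      \<and> 0 \<le> V i k \<and> (\<forall>\<mu>. 0 \<le> \<mu> \<longrightarrow> 2 * \<mu> * V i k < 1 \<longrightarrow>
        (\<integral>\<^sup>+\<omega>. ennreal (exp (\<mu> * (Y i k \<omega>)\<^sup>2)) \<partial>M) \<le> ennreal (1 / sqrt (1 - 2 * \<mu> * V i k)))"
    if "i \<in> {1..n}" for i k
    using step_gauss[OF BM[OF that] D01[OF that, of k]] unfolding V_def Y_def by auto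
  have Wm: "W i t \<in> borel_measurable M" if "i \<in> {1..n}" "t \<in> {0..1}" for i t
    using BM[OF that(1)] that(2) by (simp add: std_brownian_motion_def)
  have Ym: "Y i k \<in> borel_measurable M" if "i \<in> {1..n}" for i k
    unfolding Y_def using D01[OF that, of k] Wm[OF that]
    by (intro step_int_measurable) auto
  have hS: "(\<integral>\<^sup>+t. ennreal (indicator {0..1} t * (f (t - \<tau>))\<^sup>2) \<partial>lborel) = ennreal S"
    using periodic_shift[of "\<lambda>x. (f x)\<^sup>2" \<tau>] f_per f_meas' SE by simp
  have Vconv: "V i \<longlonglongrightarrow> S" if "i \<in> {1..n}" for i
  proof (rule L2_norm_conv[where s="\<lambda>k. step_fun (D i k)" and h="\<lambda>t. f (t - \<tau>)" and A="{0..1}"])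
    show "(\<lambda>k. \<integral>\<^sup>+ t. ennreal (indicator {0..1} t * (step_fun (D i k) t - f (t - \<tau>))\<^sup>2) \<partial>lborel) \<longlonglongrightarrow> 0"
      using D that by blast
  qed (use VY[OF that] hS S0 step_fun_measurable f_meas' in auto)
  define Z where "Z k \<omega> = (\<Sum>i\<in>{1..n}. (Y i k \<omega> - X i \<omega>)\<^sup>2)" for k \<omega>
  have Zm: "Z k \<in> borel_measurable M" for k
    unfolding Z_def using Ym Xm by (intro borel_measurable_sum) auto
  have Z0: "0 \<le> Z k \<omega>" for k \<omega> unfolding Z_def by (intro sum_nonneg) auto
  have Zint: "(\<integral>\<^sup>+\<omega>. ennreal (Z k \<omega>) \<partial>M) = (\<Sum>i\<in>{1..n}. \<integral>\<^sup>+\<omega>. ennreal ((Y i k \<omega> - X i \<omega>)\<^sup>2) \<partial>M)" for k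
  proof -
    have "(\<integral>\<^sup>+\<omega>. ennreal (Z k \<omega>) \<partial>M) = (\<integral>\<^sup>+\<omega>. (\<Sum>i\<in>{1..n}. ennreal ((Y i k \<omega> - X i \<omega>)\<^sup>2)) \<partial>M)"
      unfolding Z_def by (intro nn_integral_cong) (rule sum_ennreal[symmetric], simp)
    also have "\<dots> = (\<Sum>i\<in>{1..n}. \<integral>\<^sup>+\<omega>. ennreal ((Y i k \<omega> - X i \<omega>)\<^sup>2) \<partial>M)"
      using Ym Xm by (intro nn_integral_sum) auto
    finally show ?thesis .
  qed
  have "(\<lambda>k. \<integral>\<^sup>+\<omega>. ennreal (Z k \<omega>) \<partial>M) \<longlonglongrightarrow> (\<Sum>i\<in>{1..n}. 0)"
    unfolding Zint by (intro tendsto_sum) (use D in \<open>auto simp: Y_def\<close>)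
  then have "(\<lambda>k. \<integral>\<^sup>+\<omega>. ennreal (Z k \<omega>) \<partial>M) \<longlonglongrightarrow> 0" by simp
  from L1_AE_subseq[OF prob Zm Z0 this] obtain r where r: "strict_mono r"
    "AE \<omega> in M. (\<lambda>k. Z (r k) \<omega>) \<longlonglongrightarrow> 0" by blast
  have AEY: "AE \<omega> in M. \<forall>i\<in>{1..n}. (\<lambda>k. Y i (r k) \<omega>) \<longlonglongrightarrow> X i \<omega>"
    using r(2)
  proof eventually_elim
    case (elim \<omega>)
    show ?case
    proof
      fix i assume i: "i \<in> {1..n}"
      have "(\<lambda>k. (Y i (r k) \<omega> - X i \<omega>)\<^sup>2) \<longlonglongrightarrow> 0"
      proof (rule tendsto_sandwich[OF _ _ tendsto_const elim])
        show "\<forall>\<^sub>F k in sequentially. 0 \<le> (Y i (r k) \<omega> - X i \<omega>)\<^sup>2" by simp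
        show "\<forall>\<^sub>F k in sequentially. (Y i (r k) \<omega> - X i \<omega>)\<^sup>2 \<le> Z (r k) \<omega>"
          unfolding Z_def using i by (intro always_eventually allI member_le_sum) auto
      qed
      then have "(\<lambda>k. sqrt ((Y i (r k) \<omega> - X i \<omega>)\<^sup>2)) \<longlonglongrightarrow> sqrt 0" by (rule tendsto_real_sqrt)
      then have "(\<lambda>k. \<bar>Y i (r k) \<omega> - X i \<omega>\<bar>) \<longlonglongrightarrow> 0" by simp
      then have "(\<lambda>k. Y i (r k) \<omega> - X i \<omega>) \<longlonglongrightarrow> 0" by (simp add: tendsto_rabs_zero_iff)
      then show "(\<lambda>k. Y i (r k) \<omega>) \<longlonglongrightarrow> X i \<omega>" by (rule LIM_zero_cancel)
    qed
  qed
  define F where "F k \<omega> = ennreal (exp (\<mu> * (\<Sum>i\<in>{1..n}. (Y i (r k) \<omega>)\<^sup>2)))" for k \<omega>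
  have Fm: "F k \<in> borel_measurable M" for k
    unfolding F_def using Ym by measurable
  have "(\<integral>\<^sup>+\<omega>. ennreal (exp (\<mu> * (\<Sum>i\<in>{1..n}. (X i \<omega>)\<^sup>2))) \<partial>M) = (\<integral>\<^sup>+\<omega>. liminf (\<lambda>k. F k \<omega>) \<partial>M)"
  proof (rule nn_integral_cong_AE)
    show "AE \<omega> in M. ennreal (exp (\<mu> * (\<Sum>i\<in>{1..n}. (X i \<omega>)\<^sup>2))) = liminf (\<lambda>k. F k \<omega>)"
      using AEY
    proof eventually_elim
      case (elim \<omega>)
      have "(\<lambda>k. F k \<omega>) \<longlonglongrightarrow> ennreal (exp (\<mu> * (\<Sum>i\<in>{1..n}. (X i \<omega>)\<^sup>2)))"
        unfolding F_def using elim by (intro tendsto_ennrealI tendsto_intros) auto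
      then show ?case by (rule lim_imp_Liminf[symmetric, OF trivial_limit_sequentially])
    qed
  qed
  also have "\<dots> \<le> liminf (\<lambda>k. \<integral>\<^sup>+\<omega>. F k \<omega> \<partial>M)"
    by (rule nn_integral_liminf[OF Fm])
  finally have fatou: "(\<integral>\<^sup>+\<omega>. ennreal (exp (\<mu> * (\<Sum>i\<in>{1..n}. (X i \<omega>)\<^sup>2))) \<partial>M) \<le> liminf (\<lambda>k. \<integral>\<^sup>+\<omega>. F k \<omega> \<partial>M)" .
  have prodF: "(\<integral>\<^sup>+\<omega>. F k \<omega> \<partial>M) = (\<Prod>i\<in>{1..n}. \<integral>\<^sup>+\<omega>. ennreal (exp (\<mu> * (Y i (r k) \<omega>)\<^sup>2)) \<partial>M)" for k
  proof -
    have ind0: "indep_vars (\<lambda>_. borel) (\<lambda>i \<omega>. (\<lambda>p. ennreal (exp (\<mu> * (psum (D i (r k)) p)\<^sup>2))) (restrict (\<lambda>t. W i t \<omega>) {0..1})) {1..n}"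
    proof (rule indep_vars_compose2[OF indep])
      fix i assume i: "i \<in> {1..n}"
      have "psum (D i (r k)) \<in> borel_measurable (Pi\<^sub>M {0..1} (\<lambda>_. borel))"
        using D01[OF i, of "r k"] by (intro psum_measurable) auto
      then show "(\<lambda>p. ennreal (exp (\<mu> * (psum (D i (r k)) p)\<^sup>2))) \<in> borel_measurable (Pi\<^sub>M {0..1} (\<lambda>_. borel))"
        by measurable
    qed
    have ind: "indep_vars (\<lambda>_. borel) (\<lambda>i \<omega>. ennreal (exp (\<mu> * (Y i (r k) \<omega>)\<^sup>2))) {1..n}"
    proof (rule iffD1[OF indep_vars_cong ind0])
      fix i assume i: "i \<in> {1..n}"
      show "(\<lambda>\<omega>. (\<lambda>p. ennreal (exp (\<mu> * (psum (D i (r k)) p)\<^sup>2))) (restrict (\<lambda>t. W i t \<omega>) {0..1}))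
          = (\<lambda>\<omega>. ennreal (exp (\<mu> * (Y i (r k) \<omega>)\<^sup>2)))"
      proof -
        have pr: "psum (D i (r k)) (restrict G {0..1}) = psum (D i (r k)) G" for G
          using D01[OF i, of "r k"] by (intro psum_restrict) auto
        show ?thesis by (simp add: fun_eq_iff Y_def step_int_psum pr)
      qed
    qed auto
    have "(\<integral>\<^sup>+\<omega>. F k \<omega> \<partial>M) = (\<integral>\<^sup>+\<omega>. (\<Prod>i\<in>{1..n}. ennreal (exp (\<mu> * (Y i (r k) \<omega>)\<^sup>2))) \<partial>M)"
      unfolding F_def by (simp add: sum_distrib_left exp_sum prod_ennreal)
    also have "\<dots> = (\<Prod>i\<in>{1..n}. \<integral>\<^sup>+\<omega>. ennreal (exp (\<mu> * (Y i (r k) \<omega>)\<^sup>2)) \<partial>M)"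
      by (rule indep_vars_nn_integral[OF _ ind]) auto
    finally show ?thesis .
  qed
  define B where "B k = (\<Prod>i\<in>{1..n}. 1 / sqrt (1 - 2 * \<mu> * V i (r k)))" for k
  have Vr: "(\<lambda>k. V i (r k)) \<longlonglongrightarrow> S" if "i \<in> {1..n}" for i
    using LIMSEQ_subseq_LIMSEQ[OF Vconv[OF that] r(1)] by (simp add: comp_def)
  have ev: "eventually (\<lambda>k. \<forall>i\<in>{1..n}. 2 * \<mu> * V i (r k) < 1) sequentially"
  proof (subst eventually_ball_finite_distrib, simp, intro ballI)
    fix i assume i: "i \<in> {1..n}"
    have "(\<lambda>k. 2 * \<mu> * V i (r k)) \<longlonglongrightarrow> 2 * \<mu> * S" by (intro tendsto_intros Vr[OF i])
    from order_tendstoD(2)[OF this \<mu>(2)] show "eventually (\<lambda>k. 2 * \<mu> * V i (r k) < 1) sequentially" .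
  qed
  have evle: "eventually (\<lambda>k. (\<integral>\<^sup>+\<omega>. F k \<omega> \<partial>M) \<le> ennreal (B k)) sequentially"
    using ev
  proof eventually_elim
    case (elim k)
    have "(\<integral>\<^sup>+\<omega>. F k \<omega> \<partial>M) \<le> (\<Prod>i\<in>{1..n}. ennreal (1 / sqrt (1 - 2 * \<mu> * V i (r k))))"
      unfolding prodF
    proof (rule prod_mono_ennreal)
      fix i assume i: "i \<in> {1..n}"
      show "(\<integral>\<^sup>+\<omega>. ennreal (exp (\<mu> * (Y i (r k) \<omega>)\<^sup>2)) \<partial>M) \<le> ennreal (1 / sqrt (1 - 2 * \<mu> * V i (r k)))"
        using VY[OF i, of "r k"] elim i \<mu>(1) by blast
    qed
    also have "\<dots> = ennreal (B k)" unfolding B_def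
      by (rule prod_ennreal) (use elim in \<open>force\<close>)
    finally show ?case .
  qed
  have "B \<longlonglongrightarrow> (\<Prod>i\<in>{1..n}. 1 / sqrt (1 - 2 * \<mu> * S))"
    unfolding B_def using \<mu> by (intro tendsto_prod tendsto_intros Vr) auto
  then have "B \<longlonglongrightarrow> (1 / sqrt (1 - 2 * \<mu> * S)) ^ n" by simp
  then have "(\<lambda>k. ennreal (B k)) \<longlonglongrightarrow> ennreal ((1 / sqrt (1 - 2 * \<mu> * S)) ^ n)"
    by (rule tendsto_ennrealI)
  then have limB: "liminf (\<lambda>k. ennreal (B k)) = ennreal ((1 / sqrt (1 - 2 * \<mu> * S)) ^ n)"
    by (rule lim_imp_Liminf[OF trivial_limit_sequentially])
  have "liminf (\<lambda>k. \<integral>\<^sup>+\<omega>. F k \<omega> \<partial>M) \<le> liminf (\<lambda>k. ennreal (B k))"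
    by (rule Liminf_mono[OF evle])
  then show ?thesis using fatou limB by simp
qed

theorem lemma5:
  fixes M :: "'a measure"
    and g f :: "real \<Rightarrow> real"
    and W :: "nat \<Rightarrow> real \<Rightarrow> 'a \<Rightarrow> real"
    and X :: "nat \<Rightarrow> real \<Rightarrow> 'a \<Rightarrow> real"
    and n :: nat and \<alpha> :: real
  assumes prob: "prob_space M"
    and g_meas: "g \<in> borel_measurable lborel"
    and g_nonneg: "\<And>x. 0 \<le> g x"
    and g_int: "integrable lborel g"
    and g_one: "integral\<^sup>L lborel g = 1"
    and BM: "\<And>i. i \<in> {1..n} \<Longrightarrow> std_brownian_motion M (W i)"
    and indep: "prob_space.indep_vars M (\<lambda>_. Pi\<^sub>M {0..1} (\<lambda>_. borel))
                  (\<lambda>i \<omega>. restrict (\<lambda>t. W i t \<omega>) {0..1}) {1..n}"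
    and f_meas: "f \<in> borel_measurable lborel"
    and f_L2: "set_integrable lborel {0..1} (\<lambda>x. (f x)\<^sup>2)"
    and f_per: "\<And>x. f (x + 1) = f x"
    and X_meas: "\<And>i. i \<in> {1..n} \<Longrightarrow>
                   (\<lambda>(\<tau>, \<omega>). X i \<tau> \<omega>) \<in> borel_measurable (lborel \<Otimes>\<^sub>M M)"
    and X_ito: "\<And>i \<tau>. i \<in> {1..n} \<Longrightarrow> is_ito_integral M (W i) (\<lambda>t. f (t - \<tau>)) (X i \<tau>)"
    and \<alpha>_pos: "\<alpha> > 0"
  shows "measure M {\<omega> \<in> space M.
            (1/2) * (\<Sum>i=1..n. \<integral>\<tau>. g \<tau> * (X i \<tau> \<omega>)\<^sup>2 \<partial>lborel)
              - real n / 2 * (\<integral>x\<in>{0..1}. (f x)\<^sup>2 \<partial>lborel) \<ge> \<alpha>}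
         \<le> exp (- \<alpha>\<^sup>2 / (real n * (\<integral>x\<in>{0..1}. (f x)\<^sup>2 \<partial>lborel)\<^sup>2
                        + 2 * \<alpha> * (\<integral>x\<in>{0..1}. (f x)\<^sup>2 \<partial>lborel)))"
proof -
  interpret prob_space M by fact
  interpret P: pair_sigma_finite lborel M ..
  define S where "S = (\<integral>x\<in>{0..1}. (f x)\<^sup>2 \<partial>lborel)"
  have fi: "integrable lborel (\<lambda>x. indicator {0..1} x * (f x)\<^sup>2)"
    using f_L2 by (simp add: set_integrable_def)
  have Sdef: "S = (\<integral>x. indicator {0..1} x * (f x)\<^sup>2 \<partial>lborel)"
    by (simp add: S_def set_lebesgue_integral_def)
  have SE: "(\<integral>\<^sup>+t. ennreal (indicator {0..1} t * (f t)\<^sup>2) \<partial>lborel) = ennreal S"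
    unfolding Sdef using fi by (intro nn_integral_eq_integral) auto
  have S0: "0 \<le> S" unfolding Sdef by (intro integral_nonneg_AE) auto
  define A where "A = {\<omega> \<in> space M.
            (1/2) * (\<Sum>i=1..n. \<integral>\<tau>. g \<tau> * (X i \<tau> \<omega>)\<^sup>2 \<partial>lborel) - real n / 2 * S \<ge> \<alpha>}"
  have "measure M A \<le> exp (- \<alpha>\<^sup>2 / (real n * S\<^sup>2 + 2 * \<alpha> * S))"
  proof (cases "n = 0 \<or> S = 0")
    case True
    then show ?thesis
    proof
      assume "n = 0" then have "A = {}" using \<alpha>_pos by (auto simp: A_def)
      then show ?thesis by simp
    next
      assume "S = 0" then show ?thesis by simp
    qed
  next
    case False
    then have n: "0 < n" and Sp: "0 < S" using S0 by auto
    define lm where "lm = 2 * \<alpha> / (real n * S\<^sup>2 + 2 * \<alpha> * S)"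
    note fb = final_bound[OF n Sp \<alpha>_pos, folded lm_def]
    define \<mu> where "\<mu> = lm / 2"
    have \<mu>: "0 \<le> \<mu>" "2 * \<mu> * S < 1" using fb by (auto simp: \<mu>_def)
    define c where "c = exp (- lm * (\<alpha> + real n * S / 2))"
    define Bn where "Bn = (1 / sqrt (1 - 2 * \<mu> * S)) ^ n"
    have c0: "0 \<le> c" by (simp add: c_def)
    have Bn0: "0 \<le> Bn" using \<mu> by (simp add: Bn_def)
    have Xp: "(\<lambda>x. X i (fst x) (snd x)) \<in> borel_measurable (lborel \<Otimes>\<^sub>M M)" if "i \<in> {1..n}" for i
      using X_meas[OF that] by (simp add: split_beta')
    have Xtau: "(\<lambda>\<tau>. X i \<tau> \<omega>) \<in> borel_measurable lborel" if "i \<in> {1..n}" "\<omega> \<in> space M" for i \<omega>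
      using measurable_compose[OF measurable_Pair2'[OF that(2)] Xp[OF that(1)]] by simp
    have Xom: "(\<lambda>\<omega>. X i \<tau> \<omega>) \<in> borel_measurable M" if "i \<in> {1..n}" for i \<tau>
      using measurable_compose[OF measurable_Pair1'[of \<tau> lborel M] Xp[OF that]] by simp
    define H where "H \<tau> \<omega> = ennreal (c * (g \<tau> * exp (\<mu> * (\<Sum>i\<in>{1..n}. (X i \<tau> \<omega>)\<^sup>2))))" for \<tau> \<omega>
    have Hm: "(\<lambda>x. H (fst x) (snd x)) \<in> borel_measurable (lborel \<Otimes>\<^sub>M M)"
    proof -
      have "(\<lambda>x. \<Sum>i\<in>{1..n}. (X i (fst x) (snd x))\<^sup>2) \<in> borel_measurable (lborel \<Otimes>\<^sub>M M)"
        using Xp by (intro borel_measurable_sum) auto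
      moreover have "(\<lambda>x. g (fst x)) \<in> borel_measurable (lborel \<Otimes>\<^sub>M M)" using g_meas by measurable
      ultimately show ?thesis unfolding H_def by measurable
    qed
    have pw: "indicator A \<omega> \<le> (\<integral>\<^sup>+\<tau>. H \<tau> \<omega> \<partial>lborel)" if \<omega>: "\<omega> \<in> space M" for \<omega>
    proof (cases "\<omega> \<in> A")
      case False then show ?thesis by simp
    next
      case True
      define a where "a i = (\<integral>\<tau>. g \<tau> * (X i \<tau> \<omega>)\<^sup>2 \<partial>lborel)" for i
      have inA: "(1/2) * (\<Sum>i=1..n. a i) - real n / 2 * S \<ge> \<alpha>" using True by (simp add: A_def a_def)
      have gm: "g \<in> borel_measurable lborel" by fact
      have "lm * (\<alpha> + real n * S / 2) \<le> \<mu> * (\<Sum>i=1..n. a i)"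
      proof -
        have "lm * (\<alpha> + real n * S / 2) \<le> lm * ((1/2) * (\<Sum>i=1..n. a i))"
          using inA fb(1) by (intro mult_left_mono) auto
        then show ?thesis by (simp add: \<mu>_def)
      qed
      then have one: "1 \<le> c * exp (\<mu> * (\<Sum>i=1..n. a i))"
        unfolding c_def by (simp add: mult_exp_exp)
      have jen: "ennreal (exp (\<mu> * (\<Sum>i=1..n. a i))) \<le> (\<integral>\<^sup>+\<tau>. ennreal (g \<tau> * exp (\<mu> * (\<Sum>i\<in>{1..n}. (X i \<tau> \<omega>)\<^sup>2))) \<partial>lborel)"
      proof (rule jensen_exp[OF g_meas _ g_nonneg g_int g_one])
        show "(\<lambda>\<tau>. \<mu> * (\<Sum>i\<in>{1..n}. (X i \<tau> \<omega>)\<^sup>2)) \<in> borel_measurable lborel"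
          using Xtau[OF _ \<omega>] by (intro borel_measurable_times borel_measurable_const borel_measurable_sum) auto
        show "0 \<le> \<mu> * (\<Sum>i\<in>{1..n}. (X i \<tau> \<omega>)\<^sup>2)" for \<tau> using \<mu> by (simp add: sum_nonneg)
        have ai: "ennreal (a i) \<le> (\<integral>\<^sup>+\<tau>. ennreal (g \<tau> * (X i \<tau> \<omega>)\<^sup>2) \<partial>lborel)" if "i \<in> {1..n}" for i
          unfolding a_def using Xtau[OF that \<omega>] g_meas g_nonneg by (intro integral_le_nn) auto
        have a0: "0 \<le> a i" for i unfolding a_def using g_nonneg by (intro integral_nonneg_AE) auto
        have "ennreal (\<mu> * (\<Sum>i=1..n. a i)) = ennreal \<mu> * (\<Sum>i=1..n. ennreal (a i))"
          using \<mu> a0 by (simp add: ennreal_mult sum_nonneg)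
        also have "\<dots> \<le> ennreal \<mu> * (\<Sum>i=1..n. \<integral>\<^sup>+\<tau>. ennreal (g \<tau> * (X i \<tau> \<omega>)\<^sup>2) \<partial>lborel)"
          by (intro mult_left_mono sum_mono ai) auto
        also have "\<dots> = ennreal \<mu> * (\<integral>\<^sup>+\<tau>. (\<Sum>i=1..n. ennreal (g \<tau> * (X i \<tau> \<omega>)\<^sup>2)) \<partial>lborel)"
          using Xtau[OF _ \<omega>] g_meas by (subst nn_integral_sum) auto
        also have "\<dots> = (\<integral>\<^sup>+\<tau>. ennreal \<mu> * (\<Sum>i=1..n. ennreal (g \<tau> * (X i \<tau> \<omega>)\<^sup>2)) \<partial>lborel)"
          using Xtau[OF _ \<omega>] g_meas by (subst nn_integral_cmult) (auto intro!: borel_measurable_sum)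
        also have "\<dots> = (\<integral>\<^sup>+\<tau>. ennreal (g \<tau> * (\<mu> * (\<Sum>i\<in>{1..n}. (X i \<tau> \<omega>)\<^sup>2))) \<partial>lborel)"
        proof (intro nn_integral_cong)
          fix \<tau>
          have "(\<Sum>i=1..n. ennreal (g \<tau> * (X i \<tau> \<omega>)\<^sup>2)) = ennreal (\<Sum>i=1..n. g \<tau> * (X i \<tau> \<omega>)\<^sup>2)"
            using g_nonneg by (intro sum_ennreal) auto
          then show "ennreal \<mu> * (\<Sum>i=1..n. ennreal (g \<tau> * (X i \<tau> \<omega>)\<^sup>2)) = ennreal (g \<tau> * (\<mu> * (\<Sum>i\<in>{1..n}. (X i \<tau> \<omega>)\<^sup>2)))"
            using \<mu> g_nonneg[of \<tau>] by (simp add: ennreal_mult[symmetric] sum_nonneg sum_distrib_left algebra_simps)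
        qed
        finally show "ennreal (\<mu> * (\<Sum>i=1..n. a i)) \<le> (\<integral>\<^sup>+\<tau>. ennreal (g \<tau> * (\<mu> * (\<Sum>i\<in>{1..n}. (X i \<tau> \<omega>)\<^sup>2))) \<partial>lborel)" .
      qed
      have "indicator A \<omega> = (1::ennreal)" using True by simp
      also have "\<dots> \<le> ennreal (c * exp (\<mu> * (\<Sum>i=1..n. a i)))" using one by simp
      also have "\<dots> = ennreal c * ennreal (exp (\<mu> * (\<Sum>i=1..n. a i)))" using c0 by (simp add: ennreal_mult)
      also have "\<dots> \<le> ennreal c * (\<integral>\<^sup>+\<tau>. ennreal (g \<tau> * exp (\<mu> * (\<Sum>i\<in>{1..n}. (X i \<tau> \<omega>)\<^sup>2))) \<partial>lborel)"
        by (intro mult_left_mono jen) auto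
      also have "\<dots> = (\<integral>\<^sup>+\<tau>. ennreal c * ennreal (g \<tau> * exp (\<mu> * (\<Sum>i\<in>{1..n}. (X i \<tau> \<omega>)\<^sup>2))) \<partial>lborel)"
      proof (rule nn_integral_cmult[symmetric])
        show "(\<lambda>\<tau>. ennreal (g \<tau> * exp (\<mu> * (\<Sum>i\<in>{1..n}. (X i \<tau> \<omega>)\<^sup>2)))) \<in> borel_measurable lborel"
          using Xtau[OF _ \<omega>] g_meas by (intro measurable_compose[OF _ measurable_ennreal] borel_measurable_times
              borel_measurable_exp borel_measurable_const borel_measurable_sum borel_measurable_power) auto
      qed
      also have "\<dots> = (\<integral>\<^sup>+\<tau>. H \<tau> \<omega> \<partial>lborel)"
        unfolding H_def using c0 g_nonneg by (intro nn_integral_cong) (simp add: ennreal_mult)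
      finally show ?thesis .
    qed
    have kt: "(\<integral>\<^sup>+\<omega>. H \<tau> \<omega> \<partial>M) \<le> ennreal (c * g \<tau>) * ennreal Bn" for \<tau>
    proof -
      have em: "(\<lambda>\<omega>. ennreal (exp (\<mu> * (\<Sum>i\<in>{1..n}. (X i \<tau> \<omega>)\<^sup>2)))) \<in> borel_measurable M"
        using Xom by (intro measurable_compose[OF _ measurable_ennreal] borel_measurable_exp
            borel_measurable_times borel_measurable_const borel_measurable_sum borel_measurable_power) auto
      have "(\<integral>\<^sup>+\<omega>. H \<tau> \<omega> \<partial>M) = (\<integral>\<^sup>+\<omega>. ennreal (c * g \<tau>) * ennreal (exp (\<mu> * (\<Sum>i\<in>{1..n}. (X i \<tau> \<omega>)\<^sup>2))) \<partial>M)"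
        unfolding H_def using c0 g_nonneg[of \<tau>] by (intro nn_integral_cong) (simp add: ennreal_mult[symmetric] mult.assoc)
      also have "\<dots> = ennreal (c * g \<tau>) * (\<integral>\<^sup>+\<omega>. ennreal (exp (\<mu> * (\<Sum>i\<in>{1..n}. (X i \<tau> \<omega>)\<^sup>2))) \<partial>M)"
        using em by (rule nn_integral_cmult)
      also have "\<dots> \<le> ennreal (c * g \<tau>) * ennreal Bn"
        unfolding Bn_def
        by (intro mult_left_mono key_tau[OF prob BM indep f_meas f_per SE S0 _ \<mu>, where X="\<lambda>i. X i \<tau>" and \<tau>=\<tau>] X_ito) auto
      finally show ?thesis .
    qed
    have "ennreal (measure M A) \<le> ennreal (c * Bn)"
    proof (cases "A \<in> sets M")
      case False then show ?thesis by (simp add: measure_notin_sets)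
    next
      case True
      have "ennreal (measure M A) = (\<integral>\<^sup>+\<omega>. indicator A \<omega> \<partial>M)"
        using True by (simp add: emeasure_eq_measure[symmetric])
      also have "\<dots> \<le> (\<integral>\<^sup>+\<omega>. (\<integral>\<^sup>+\<tau>. H \<tau> \<omega> \<partial>lborel) \<partial>M)"
        by (intro nn_integral_mono pw)
      also have "\<dots> = (\<integral>\<^sup>+\<tau>. (\<integral>\<^sup>+\<omega>. H \<tau> \<omega> \<partial>M) \<partial>lborel)"
        by (rule P.Fubini') (use Hm in \<open>simp add: split_beta'\<close>)
      also have "\<dots> \<le> (\<integral>\<^sup>+\<tau>. ennreal Bn * ennreal c * ennreal (g \<tau>) \<partial>lborel)"
        using kt c0 g_nonneg by (intro nn_integral_mono) (simp add: ennreal_mult mult_ac)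
      also have "\<dots> = ennreal Bn * ennreal c * (\<integral>\<^sup>+\<tau>. ennreal (g \<tau>) \<partial>lborel)"
        using g_meas by (intro nn_integral_cmult) auto
      also have "(\<integral>\<^sup>+\<tau>. ennreal (g \<tau>) \<partial>lborel) = 1"
        using g_int g_one g_nonneg by (subst nn_integral_eq_integral) auto
      finally show ?thesis using c0 Bn0 by (simp add: ennreal_mult mult_ac)
    qed
    then have "measure M A \<le> c * Bn" using c0 Bn0 by (simp add: ennreal_le_iff)
    also have "c * Bn = exp (- lm * (\<alpha> + real n * S / 2)) * (1 / sqrt (1 - lm * S)) ^ n"
      by (simp add: c_def Bn_def \<mu>_def)
    also have "\<dots> \<le> exp (- \<alpha>\<^sup>2 / (real n * S\<^sup>2 + 2 * \<alpha> * S))" by (rule fb(3))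
    finally show ?thesis .
  qed
  then show ?thesis by (simp add: A_def S_def)
qed

end
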